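(* Let $a>0$ and let $L_3=a\mathbb{Z}^3\cup a(\mathbb{Z}+\tfrac12)^3\cup W\cup\Lambda$. The Voronoi cell of the origin with respect to $L_3$ is the regular octahedron $$\{(x,y,z)\in\mathbb{R}^3:\ |x|+|y|+|z|\le \tfrac{5a}{16}\},$$ whose volume is $$V^{(3)}_\Gamma=\frac{125}{3072}a^3 .$$ The same holds, after translation, for every point of $a\mathbb{Z}^3\cup a(\mathbb{Z}+\tfrac12)^3$.
   Context: Fix $a>0$. $W\subset\mathbb{R}^3$ is the set of all points $a(u_1,u_2,u_3)$ such that $(u_1,u_2,u_3)$ is a permutation of a triple $(i,\ j+\tfrac12,\ k+\varepsilon)$ with $i,j,k\in\mathbb{Z}$ and $\varepsilon\in\{\tfrac14,\tfrac34\}$. $\Lambda=\{p+\tfrac{5a}{24}(s_1,s_2,s_3): p\in a\mathbb{Z}^3\cup a(\mathbb{Z}+\tfrac12)^3,\ s_i\in\{-1,1\}\}$. For a discrete set $P\subset\mathbb{R}^3$ and $p\in P$, the Voronoi cell of $p$ with respect to $P$ is $\{x\in\mathbb{R}^3: |x-p|\le|x-q|\ \text{for all } q\in P\}$. *)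

theory Defs
  imports "HOL-Analysis.Analysis"
begin

text \<open>Points of R^3 are modelled as real^3; components x$1, x$2, x$3.\<close>

definition int_lattice :: "real \<Rightarrow> (real^3) set" where
  "int_lattice a = {vector [a * of_int i, a * of_int j, a * of_int k] | i j k :: int. True}"

definition half_lattice :: "real \<Rightarrow> (real^3) set" where
  "half_lattice a = {vector [a * (of_int i + 1/2), a * (of_int j + 1/2), a * (of_int k + 1/2)]
                     | i j k :: int. True}"

text \<open>W: a*(u1,u2,u3) with (u1,u2,u3) a permutation of (i, j+1/2, k+eps), eps in {1/4,3/4}.\<close>
definition W_set :: "real \<Rightarrow> (real^3) set" where
  "W_set a = {x. \<exists>(i::int) (j::int) (k::int) (eps::real) (\<sigma>::3 \<Rightarrow> 3).
      eps \<in> {1/4, 3/4} \<and> \<sigma> permutes UNIV \<and>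
      x = (\<chi> m. a * ((vector [of_int i, of_int j + 1/2, of_int k + eps] :: real^3) $ \<sigma> m))}"

definition Lambda_set :: "real \<Rightarrow> (real^3) set" where
  "Lambda_set a = {p + (5 * a / 24) *\<^sub>R s | p s.
      p \<in> int_lattice a \<union> half_lattice a \<and> (\<forall>m. s $ m \<in> {-1, 1})}"

definition L3 :: "real \<Rightarrow> (real^3) set" where
  "L3 a = int_lattice a \<union> half_lattice a \<union> W_set a \<union> Lambda_set a"

definition voronoi_cell :: "(real^3) set \<Rightarrow> real^3 \<Rightarrow> (real^3) set" where
  "voronoi_cell P p = {x. \<forall>q\<in>P. norm (x - p) \<le> norm (x - q)}"

definition octahedron :: "real \<Rightarrow> (real^3) set" where
  "octahedron a = {x. \<bar>x $ 1\<bar> + \<bar>x $ 2\<bar> + \<bar>x $ 3\<bar> \<le> 5 * a / 16}"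

end

theory Submission
  imports Defs
begin


lemma inner3: "(x::real^3) \<bullet> y = x$1*y$1 + x$2*y$2 + x$3*y$3"
  by (simp add: inner_vec_def sum_3)

lemma sq_ge: "0 \<le> c \<Longrightarrow> c \<le> \<bar>t::real\<bar> \<Longrightarrow> c*c \<le> t*t"
  by (metis abs_mult_self_eq mult_mono order_trans abs_ge_zero)

lemma big_gap: "5/8 \<le> \<bar>t::real\<bar> \<Longrightarrow> 5/8*\<bar>t\<bar> \<le> t*t"
  by (metis abs_mult_self_eq abs_ge_zero mult_right_mono)

lemma int_cases: "(n::int) = 0 \<or> 1 \<le> real_of_int n \<or> real_of_int n \<le> -1"
  by linarith

lemma int_cases2: "(n::int) = 0 \<or> n = -1 \<or> 1 \<le> real_of_int n \<or> real_of_int n \<le> -2"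
  by linarith

lemma int_gap: "5/8*\<bar>real_of_int n\<bar> \<le> real_of_int n * real_of_int n"
proof -
  consider "n = 0" | "5/8 \<le> \<bar>real_of_int n\<bar>" using int_cases[of n] by arith
  then show ?thesis
  proof cases
    case 1 then show ?thesis by simp
  next
    case 2 from big_gap[OF this] show ?thesis .
  qed
qed

lemma half_abs: "1/2 \<le> \<bar>real_of_int n + 1/2\<bar>"
  using int_cases[of n] by arith

lemma half_lb: "1/4 \<le> (real_of_int n + 1/2) * (real_of_int n + 1/2)"
  using sq_ge[OF _ half_abs[of n]] by simp

lemma mono_gap: assumes "5/16 \<le> r" "r \<le> \<bar>t::real\<bar>" shows "5/8*\<bar>t\<bar> \<le> t*t + (5/8*r - r*r)"
proof -
  have "0 \<le> (\<bar>t\<bar> - r) * (\<bar>t\<bar> + r - 5/8)" using assms by (intro mult_nonneg_nonneg) auto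
  hence "0 \<le> \<bar>t\<bar>*\<bar>t\<bar> - 5/8*\<bar>t\<bar> - r*r + 5/8*r" by (simp only: algebra_simps)
  moreover have "\<bar>t\<bar>*\<bar>t\<bar> = t*t" by (rule abs_mult_self_eq)
  ultimately show ?thesis by linarith
qed

lemma half_gap: "5/8*\<bar>real_of_int n + 1/2\<bar> \<le> (real_of_int n + 1/2) * (real_of_int n + 1/2) + 1/16"
  using mono_gap[OF _ half_abs[of n]] by linarith

lemma any_gap: "5/8*\<bar>t::real\<bar> \<le> t*t + 25/256"
proof -
  have "0 \<le> (\<bar>t\<bar> - 5/16)*(\<bar>t\<bar> - 5/16)" by simp
  hence "0 \<le> \<bar>t\<bar>*\<bar>t\<bar> - 5/8*\<bar>t\<bar> + 25/256" by (simp only: algebra_simps)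
  moreover have "\<bar>t\<bar>*\<bar>t\<bar> = t*t" by (rule abs_mult_self_eq)
  ultimately show ?thesis by linarith
qed

lemma eps_lb: assumes "eps \<in> {1/4, 3/4::real}" shows "1/16 \<le> (real_of_int n + eps) * (real_of_int n + eps)"
proof -
  have "1/4 \<le> \<bar>real_of_int n + eps\<bar>" proof -
    from assms have "eps = 1/4 \<or> eps = 3/4" by auto
    moreover have "x = 0 \<or> 1 \<le> x \<or> x \<le> -1 \<Longrightarrow> eps = 1/4 \<or> eps = 3/4 \<Longrightarrow> 1/4 \<le> \<bar>x + eps\<bar>" for x :: real
      by (auto simp: abs_if)
    moreover have "real_of_int n = 0 \<or> 1 \<le> real_of_int n \<or> real_of_int n \<le> -1" using int_cases[of n] by auto
    ultimately show ?thesis by blast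
  qed
  from sq_ge[OF _ this] show ?thesis by simp
qed

lemma small_gap: assumes "\<bar>t::real\<bar> = r \<or> 5/8 \<le> \<bar>t\<bar>" "0 \<le> r" "r \<le> 5/8"
  shows "5/8*\<bar>t\<bar> \<le> t*t + (5/8*r - r*r)"
  using assms(1)
proof
  assume h: "\<bar>t\<bar> = r"
  have "t*t = r*r" by (metis abs_mult_self_eq h)
  with h show ?thesis by linarith
next
  assume "5/8 \<le> \<bar>t\<bar>"
  from big_gap[OF this] have "5/8*\<bar>t\<bar> \<le> t*t" .
  moreover have "0 \<le> (5/8 - r) * r" using assms by simp
  ultimately show ?thesis by (simp only: algebra_simps)
qed

lemma lamI_abs: assumes "s \<in> {-1, 1::real}" shows
   "\<bar>real_of_int n + 5/24 * s\<bar> = 5/24 \<or> 5/8 \<le> \<bar>real_of_int n + 5/24 * s\<bar>"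
proof -
  from assms have "s = -1 \<or> s = 1" by auto
  moreover have "real_of_int n = 0 \<or> real_of_int n = -1 \<or> 1 \<le> real_of_int n \<or> real_of_int n \<le> -2" using int_cases2[of n] by auto
  moreover have "x = 0 \<or> x = -1 \<or> 1 \<le> x \<or> x \<le> -2 \<Longrightarrow> s = -1 \<or> s = 1 \<Longrightarrow> \<bar>x + 5/24 * s\<bar> = 5/24 \<or> 5/8 \<le> \<bar>x + 5/24 * s\<bar>" for x :: real
    by (auto simp: abs_if)
  ultimately show ?thesis by blast
qed

lemma lamH_abs: assumes "s \<in> {-1, 1::real}" shows
   "\<bar>real_of_int n + 1/2 + 5/24 * s\<bar> = 7/24 \<or> 5/8 \<le> \<bar>real_of_int n + 1/2 + 5/24 * s\<bar>"
proof -
  from assms have "s = -1 \<or> s = 1" by auto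
  moreover have "real_of_int n = 0 \<or> real_of_int n = -1 \<or> 1 \<le> real_of_int n \<or> real_of_int n \<le> -2" using int_cases2[of n] by auto
  moreover have "x = 0 \<or> x = -1 \<or> 1 \<le> x \<or> x \<le> -2 \<Longrightarrow> s = -1 \<or> s = 1 \<Longrightarrow> \<bar>x + 1/2 + 5/24 * s\<bar> = 7/24 \<or> 5/8 \<le> \<bar>x + 1/2 + 5/24 * s\<bar>" for x :: real
    by (auto simp: abs_if)
  ultimately show ?thesis by blast
qed

lemma lamI_lb: assumes "s \<in> {-1, 1::real}" shows "25/576 \<le> (real_of_int n + 5/24 * s) * (real_of_int n + 5/24 * s)"
proof -
  have "5/24 \<le> \<bar>real_of_int n + 5/24 * s\<bar>" using lamI_abs[OF assms, of n] by linarith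
  from sq_ge[OF _ this] show ?thesis by simp
qed

lemma lamI_gap: assumes "s \<in> {-1, 1::real}" shows "5/8*\<bar>real_of_int n + 5/24 * s\<bar> \<le> (real_of_int n + 5/24 * s) * (real_of_int n + 5/24 * s) + 50/576"
  using small_gap[OF lamI_abs[OF assms, of n]] by linarith

lemma lamH_lb: assumes "s \<in> {-1, 1::real}" shows "49/576 \<le> (real_of_int n + 1/2 + 5/24 * s) * (real_of_int n + 1/2 + 5/24 * s)"
proof -
  have "7/24 \<le> \<bar>real_of_int n + 1/2 + 5/24 * s\<bar>" using lamH_abs[OF assms, of n] by linarith
  from sq_ge[OF _ this] show ?thesis by simp
qed

lemma lamH_gap: assumes "s \<in> {-1, 1::real}" shows "5/8*\<bar>real_of_int n + 1/2 + 5/24 * s\<bar> \<le> (real_of_int n + 1/2 + 5/24 * s) * (real_of_int n + 1/2 + 5/24 * s) + 56/576"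
  using small_gap[OF lamH_abs[OF assms, of n]] by linarith



definition good :: "real \<Rightarrow> real^3 \<Rightarrow> bool" where
  "good a q \<longleftrightarrow> (\<forall>m. 5*a/8*\<bar>q$m\<bar> \<le> q \<bullet> q)"

lemma key_scale:
  fixes a t S :: real
  assumes "a > 0" "5/8*\<bar>t\<bar> \<le> S"
  shows "5*a/8*\<bar>a*t\<bar> \<le> a*a*S"
proof -
  have "5*a/8*\<bar>a*t\<bar> = (a*a)*(5/8*\<bar>t\<bar>)" using assms(1) by (simp add: abs_mult)
  also have "\<dots> \<le> (a*a)*S" using assms(2) by (intro mult_left_mono) auto
  finally show ?thesis .
qed

lemma good_vec:
  assumes "a>0" "q$1 = a*t1" "q$2 = a*t2" "q$3 = a*t3"
   "5/8*\<bar>t1\<bar> \<le> t1*t1+t2*t2+t3*t3" "5/8*\<bar>t2\<bar> \<le> t1*t1+t2*t2+t3*t3" "5/8*\<bar>t3\<bar> \<le> t1*t1+t2*t2+t3*t3"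
  shows "good a q"
proof -
  have Q: "q\<bullet>q = a*a*(t1*t1+t2*t2+t3*t3)" by (simp add: inner3 assms(2-4) algebra_simps)
  show ?thesis unfolding good_def
  proof
    fix m :: 3
    have "m = 1 \<or> m = 2 \<or> m = 3" by (rule exhaust_3)
    then show "5*a/8*\<bar>q$m\<bar> \<le> q\<bullet>q" unfolding Q
      using key_scale[OF assms(1) assms(5)] key_scale[OF assms(1) assms(6)] key_scale[OF assms(1) assms(7)]
      by (auto simp only: assms(2-4))
  qed
qed

lemma sqnn: "0 \<le> (t::real) * t" by simp

lemma good_int: assumes "a > 0" "q \<in> int_lattice a" shows "good a q"
proof -
  from assms(2) obtain i j k where q: "q = vector [a * of_int i, a * of_int j, a * of_int k]"
    unfolding int_lattice_def by blast
  show ?thesis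
    by (rule good_vec[OF assms(1), of q "of_int i" "of_int j" "of_int k"])
       (use int_gap[of i] int_gap[of j] int_gap[of k] sqnn[of "of_int i"] sqnn[of "of_int j"] sqnn[of "of_int k"] in \<open>simp_all add: q\<close>)
qed

lemma good_half: assumes "a > 0" "q \<in> half_lattice a" shows "good a q"
proof -
  from assms(2) obtain i j k where q: "q = vector [a * (of_int i + 1/2), a * (of_int j + 1/2), a * (of_int k + 1/2)]"
    unfolding half_lattice_def by blast
  show ?thesis
    by (rule good_vec[OF assms(1), of q "of_int i + 1/2" "of_int j + 1/2" "of_int k + 1/2"])
       (use half_gap[of i] half_gap[of j] half_gap[of k] half_lb[of i] half_lb[of j] half_lb[of k] in \<open>simp_all add: q\<close>)
qed



lemma good_W: assumes "a > 0" "x \<in> W_set a" shows "good a x"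
proof -
  from assms(2) obtain i j k eps \<sigma> where e: "eps \<in> {1/4,3/4}" "\<sigma> permutes UNIV"
    and x: "x = (\<chi> m. a * (vector [of_int i, of_int j + 1/2, of_int k + eps] :: real^3) $ \<sigma> m)"
    unfolding W_set_def by blast
  define v where "v = (vector [of_int i, of_int j + 1/2, of_int k + eps] :: real^3)"
  have xm: "x$m = a * v$(\<sigma> m)" for m by (simp add: x v_def)
  have "x\<bullet>x = sum ((\<lambda>c. (a * v $ c) * (a * v $ c)) \<circ> \<sigma>) UNIV" by (simp add: inner_vec_def xm)
  also have "\<dots> = sum (\<lambda>c. (a * v $ c) * (a * v $ c)) UNIV" by (rule sum.permute[OF e(2), symmetric])
  also have "\<dots> = a*a*(v\<bullet>v)" by (simp add: inner3 sum_3 algebra_simps)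
  finally have Q: "x\<bullet>x = a*a*(v\<bullet>v)" .
  have V: "v\<bullet>v = of_int i * of_int i + (of_int j + 1/2)*(of_int j + 1/2) + (of_int k + eps)*(of_int k + eps)"
    by (simp add: inner3 v_def)
  have cv: "5/8*\<bar>v$c\<bar> \<le> v\<bullet>v" for c
    using exhaust_3[of c] int_gap[of i] half_gap[of j] any_gap[of "of_int k + eps"] half_lb[of j]
      eps_lb[OF e(1), of k] sqnn[of "of_int i"] unfolding V by (auto simp: v_def)
  show ?thesis unfolding good_def Q xm using key_scale[OF assms(1) cv] by auto
qed



lemma good_Lambda: assumes "a > 0" "q \<in> Lambda_set a" shows "good a q"
proof -
  from assms(2) obtain p s where q: "q = p + (5 * a / 24) *\<^sub>R s" and p: "p \<in> int_lattice a \<union> half_lattice a"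
    and s: "\<forall>m. s $ m \<in> {-1, 1}" unfolding Lambda_set_def by blast
  from p show ?thesis
  proof
    assume "p \<in> int_lattice a"
    then obtain i j k where pv: "p = vector [a * of_int i, a * of_int j, a * of_int k]"
      unfolding int_lattice_def by blast
    show ?thesis
      by (rule good_vec[OF assms(1), of q "of_int i + 5/24 * s$1" "of_int j + 5/24 * s$2" "of_int k + 5/24 * s$3"])
         (use lamI_gap[OF s[rule_format, of 1], of i] lamI_gap[OF s[rule_format, of 2], of j] lamI_gap[OF s[rule_format, of 3], of k]
             lamI_lb[OF s[rule_format, of 1], of i] lamI_lb[OF s[rule_format, of 2], of j] lamI_lb[OF s[rule_format, of 3], of k]
          in \<open>simp_all add: q pv algebra_simps\<close>)
  next
    assume "p \<in> half_lattice a"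
    then obtain i j k where pv: "p = vector [a * (of_int i + 1/2), a * (of_int j + 1/2), a * (of_int k + 1/2)]"
      unfolding half_lattice_def by blast
    show ?thesis
      by (rule good_vec[OF assms(1), of q "of_int i + 1/2 + 5/24 * s$1" "of_int j + 1/2 + 5/24 * s$2" "of_int k + 1/2 + 5/24 * s$3"])
         (use lamH_gap[OF s[rule_format, of 1], of i] lamH_gap[OF s[rule_format, of 2], of j] lamH_gap[OF s[rule_format, of 3], of k]
             lamH_lb[OF s[rule_format, of 1], of i] lamH_lb[OF s[rule_format, of 2], of j] lamH_lb[OF s[rule_format, of 3], of k]
          in \<open>simp_all add: q pv algebra_simps\<close>)
  qed
qed

lemma good_L3: assumes "a > 0" "q \<in> L3 a" shows "good a q"
  using assms good_int good_half good_W good_Lambda unfolding L3_def by blast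



lemma good_ineq:
  assumes "a > 0" "good a q" "\<bar>x$1\<bar> + \<bar>x$2\<bar> + \<bar>x$3\<bar> \<le> 5*a/16"
  shows "norm x \<le> norm (x - q)"
proof -
  define Q where "Q = q \<bullet> q"
  have g: "5*a/8*\<bar>q$m\<bar> \<le> Q" for m using assms(2) unfolding good_def Q_def by auto
  have Q0: "0 \<le> Q" unfolding Q_def by simp
  have t: "5*a/8*(x$m*q$m) \<le> \<bar>x$m\<bar> * Q" for m
  proof -
    have "x$m*q$m \<le> \<bar>x$m\<bar>*\<bar>q$m\<bar>" by (metis abs_ge_self abs_mult)
    hence "5*a/8*(x$m*q$m) \<le> 5*a/8*(\<bar>x$m\<bar>*\<bar>q$m\<bar>)" using assms(1) by (intro mult_left_mono) auto
    also have "\<dots> = \<bar>x$m\<bar> * (5*a/8*\<bar>q$m\<bar>)" by (simp add: algebra_simps)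
    also have "\<dots> \<le> \<bar>x$m\<bar> * Q" by (intro mult_left_mono g) simp
    finally show ?thesis .
  qed
  have "5*a/8*(x\<bullet>q) = 5*a/8*(x$1*q$1) + 5*a/8*(x$2*q$2) + 5*a/8*(x$3*q$3)"
    by (simp add: inner3 algebra_simps)
  also have "\<dots> \<le> \<bar>x$1\<bar>*Q + \<bar>x$2\<bar>*Q + \<bar>x$3\<bar>*Q" using t[of 1] t[of 2] t[of 3] by linarith
  also have "\<dots> = (\<bar>x$1\<bar> + \<bar>x$2\<bar> + \<bar>x$3\<bar>) * Q" by (simp add: algebra_simps)
  also have "\<dots> \<le> 5*a/16 * Q" by (intro mult_right_mono assms(3) Q0)
  finally have h: "5*a/8*(x\<bullet>q) \<le> 5*a/16 * Q" .
  have "5*a/8*(2*(x\<bullet>q)) \<le> 5*a/8*Q" using h by (simp add: algebra_simps)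
  hence h2: "2*(x\<bullet>q) \<le> Q" using assms(1) by (simp add: mult_le_cancel_left_pos)
  have "(x - q) \<bullet> (x - q) = x \<bullet> x - 2*(x\<bullet>q) + Q"
    unfolding Q_def by (simp add: inner_diff_left inner_diff_right inner_commute)
  with h2 have "x \<bullet> x \<le> (x - q) \<bullet> (x - q)" by linarith
  then show ?thesis by (simp add: norm_le)
qed

lemma oct_in_cell: assumes "a > 0" "x \<in> octahedron a" shows "x \<in> voronoi_cell (L3 a) 0"
  unfolding voronoi_cell_def
proof
  show "\<forall>q\<in>L3 a. norm (x - 0) \<le> norm (x - q)"
    using good_ineq[OF assms(1) good_L3[OF assms(1)]] assms(2) unfolding octahedron_def by auto
qed

lemma zero_int: "(0::real^3) \<in> int_lattice a"
proof -
  have "(0::real^3) = vector [a * of_int 0, a * of_int 0, a * of_int 0]"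
    by (simp add: vec_eq_iff forall_3)
  then show ?thesis unfolding int_lattice_def by blast
qed

lemma cell_in_oct: assumes "a > 0" "x \<in> voronoi_cell (L3 a) 0" shows "x \<in> octahedron a"
proof -
  define s :: "real^3" where "s = (\<chi> m. if 0 \<le> x$m then 1 else -1)"
  define q where "q = (5*a/24) *\<^sub>R s"
  have "q = 0 + (5*a/24) *\<^sub>R s" by (simp add: q_def)
  moreover have "\<forall>m. s $ m \<in> {-1, 1}" by (simp add: s_def)
  ultimately have "q \<in> Lambda_set a" unfolding Lambda_set_def using zero_int[of a] by blast
  hence "q \<in> L3 a" unfolding L3_def by blast
  with assms(2) have "norm (x - 0) \<le> norm (x - q)" unfolding voronoi_cell_def by blast
  hence "x \<bullet> x \<le> (x - q) \<bullet> (x - q)" by (simp add: norm_le)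
  moreover have "(x - q) \<bullet> (x - q) = x \<bullet> x - 2*(x\<bullet>q) + q \<bullet> q"
    by (simp add: inner_diff_left inner_diff_right inner_commute)
  ultimately have h: "2*(x\<bullet>q) \<le> q \<bullet> q" by linarith
  have xs: "x$m * s$m = \<bar>x$m\<bar>" for m by (simp add: s_def abs_if)
  have ss: "s$m * s$m = 1" for m by (simp add: s_def)
  define S where "S = \<bar>x$1\<bar> + \<bar>x$2\<bar> + \<bar>x$3\<bar>"
  have "x\<bullet>q = 5*a/24*(x$1 * s$1 + x$2 * s$2 + x$3 * s$3)" by (simp add: q_def inner3 algebra_simps)
  hence xq: "x\<bullet>q = 5*a/24*S" unfolding S_def xs .
  have "q\<bullet>q = (5*a/24)*(5*a/24)*(s$1 * s$1 + s$2 * s$2 + s$3 * s$3)" by (simp add: q_def inner3 algebra_simps)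
  hence qq: "q\<bullet>q = (5*a/24)*(3*(5*a/24))" unfolding ss by simp
  have "(5*a/24)*(2*S) \<le> (5*a/24)*(3*(5*a/24))" using h unfolding xq qq by (simp add: algebra_simps)
  hence "2*S \<le> 3*(5*a/24)" using assms(1) by (simp add: mult_le_cancel_left_pos)
  then show ?thesis unfolding octahedron_def S_def by simp
qed

lemma cell0: assumes "a > 0" shows "voronoi_cell (L3 a) 0 = octahedron a"
  using oct_in_cell[OF assms] cell_in_oct[OF assms] by blast



abbreviation bcc where "bcc a \<equiv> int_lattice a \<union> half_lattice a"

lemma int_mem: "vector [a * of_int i, a * of_int j, a * of_int k] \<in> int_lattice a"
  unfolding int_lattice_def by blast

lemma half_mem: "vector [a * (of_int i + 1/2), a * (of_int j + 1/2), a * (of_int k + 1/2)] \<in> half_lattice a"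
  unfolding half_lattice_def by blast

lemma bcc_add: assumes "p \<in> bcc a" "q \<in> bcc a" shows "p + q \<in> bcc a"
proof -
  { fix i j k i' j' k' :: int
    have "vector [a * of_int i, a * of_int j, a * of_int k] + vector [a * of_int i', a * of_int j', a * of_int k']
      = (vector [a * of_int (i+i'), a * of_int (j+j'), a * of_int (k+k')] :: real^3)"
      by (simp add: vec_eq_iff forall_3 algebra_simps)
    moreover have "vector [a * of_int i, a * of_int j, a * of_int k] + vector [a * (of_int i' + 1/2), a * (of_int j' + 1/2), a * (of_int k' + 1/2)]
      = (vector [a * (of_int (i+i') + 1/2), a * (of_int (j+j') + 1/2), a * (of_int (k+k') + 1/2)] :: real^3)"
      by (simp add: vec_eq_iff forall_3 algebra_simps)
    moreover have "vector [a * (of_int i' + 1/2), a * (of_int j' + 1/2), a * (of_int k' + 1/2)] + vector [a * of_int i, a * of_int j, a * of_int k]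
      = (vector [a * (of_int (i+i') + 1/2), a * (of_int (j+j') + 1/2), a * (of_int (k+k') + 1/2)] :: real^3)"
      by (simp add: vec_eq_iff forall_3 algebra_simps)
    moreover have "vector [a * (of_int i + 1/2), a * (of_int j + 1/2), a * (of_int k + 1/2)] + vector [a * (of_int i' + 1/2), a * (of_int j' + 1/2), a * (of_int k' + 1/2)]
      = (vector [a * of_int (i+i'+1), a * of_int (j+j'+1), a * of_int (k+k'+1)] :: real^3)"
      by (simp add: vec_eq_iff forall_3 algebra_simps)
    ultimately have
      "vector [a * of_int i, a * of_int j, a * of_int k] + vector [a * of_int i', a * of_int j', a * of_int k'] \<in> bcc a"
      "vector [a * of_int i, a * of_int j, a * of_int k] + vector [a * (of_int i' + 1/2), a * (of_int j' + 1/2), a * (of_int k' + 1/2)] \<in> bcc a"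
      "vector [a * (of_int i' + 1/2), a * (of_int j' + 1/2), a * (of_int k' + 1/2)] + vector [a * of_int i, a * of_int j, a * of_int k] \<in> bcc a"
      "vector [a * (of_int i + 1/2), a * (of_int j + 1/2), a * (of_int k + 1/2)] + vector [a * (of_int i' + 1/2), a * (of_int j' + 1/2), a * (of_int k' + 1/2)] \<in> bcc a"
      using int_mem half_mem by (metis UnI1 UnI2)+ }
  note * = this
  from assms(1) obtain i j k where P: "p = vector [a * of_int i, a * of_int j, a * of_int k] \<or> p = vector [a * (of_int i + 1/2), a * (of_int j + 1/2), a * (of_int k + 1/2)]"
    unfolding int_lattice_def half_lattice_def by blast
  from assms(2) obtain i' j' k' where Q: "q = vector [a * of_int i', a * of_int j', a * of_int k'] \<or> q = vector [a * (of_int i' + 1/2), a * (of_int j' + 1/2), a * (of_int k' + 1/2)]"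
    unfolding int_lattice_def half_lattice_def by blast
  from P Q show ?thesis using *[of i j k i' j' k'] *[of i' j' k' i j k] by (elim disjE) simp_all
qed

lemma bcc_neg: assumes "p \<in> bcc a" shows "- p \<in> bcc a"
proof -
  { fix i j k :: int
    have "- vector [a * of_int i, a * of_int j, a * of_int k]
      = (vector [a * of_int (-i), a * of_int (-j), a * of_int (-k)] :: real^3)"
      by (simp add: vec_eq_iff forall_3 algebra_simps)
    moreover have "- vector [a * (of_int i + 1/2), a * (of_int j + 1/2), a * (of_int k + 1/2)]
      = (vector [a * (of_int (-i-1) + 1/2), a * (of_int (-j-1) + 1/2), a * (of_int (-k-1) + 1/2)] :: real^3)"
      by (simp add: vec_eq_iff forall_3 algebra_simps)
    ultimately have "- vector [a * of_int i, a * of_int j, a * of_int k] \<in> bcc a"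
      "- vector [a * (of_int i + 1/2), a * (of_int j + 1/2), a * (of_int k + 1/2)] \<in> bcc a"
      using int_mem half_mem by (metis UnI1 UnI2)+ }
  note * = this
  from assms(1) obtain i j k where P: "p = vector [a * of_int i, a * of_int j, a * of_int k] \<or> p = vector [a * (of_int i + 1/2), a * (of_int j + 1/2), a * (of_int k + 1/2)]"
    unfolding int_lattice_def half_lattice_def by blast
  from P show ?thesis using *[of i j k] by (elim disjE) simp_all
qed



lemma vec_int_chi: "(vector [a * of_int i, a * of_int j, a * of_int k] :: real^3) = (\<chi> m. a * of_int ((vector [i, j, k] :: int^3) $ m))"
  by (simp add: vec_eq_iff forall_3)

lemma vec_half_chi: "(vector [a * (of_int i + 1/2), a * (of_int j + 1/2), a * (of_int k + 1/2)] :: real^3) = (\<chi> m. a * (of_int ((vector [i, j, k] :: int^3) $ m) + 1/2))"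
  by (simp add: vec_eq_iff forall_3)

lemma W_shift_int:
  assumes "\<sigma> permutes UNIV" "eps \<in> {1/4, 3/4}"
  shows "(\<chi> m. a * (vector [of_int i, of_int j + 1/2, of_int k + eps] :: real^3) $ \<sigma> m) + (\<chi> m. a * of_int (N m)) \<in> W_set a"
proof -
  define M where "M = (\<lambda>c. N (inv \<sigma> c))"
  have NM: "N m = M (\<sigma> m)" for m by (simp add: M_def permutes_inverses(2)[OF assms(1)])
  define v where "v = (vector [of_int i, of_int j + 1/2, of_int k + eps] :: real^3)"
  define v' where "v' = (vector [of_int (i + M 1), of_int (j + M 2) + 1/2, of_int (k + M 3) + eps] :: real^3)"
  have V: "v' $ c = v $ c + of_int (M c)" for c
    using exhaust_3[of c] by (auto simp: v_def v'_def)
  have "(\<chi> m. a * v $ \<sigma> m) + (\<chi> m. a * of_int (N m)) = (\<chi> m. a * v' $ \<sigma> m)"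
    unfolding vec_eq_iff by (simp add: V NM algebra_simps)
  then show ?thesis unfolding W_set_def v_def v'_def using assms by blast
qed

lemma tr3: "Transposition.transpose (1::3) 2 1 = 2" "Transposition.transpose (1::3) 2 2 = 1" "Transposition.transpose (1::3) 2 3 = 3"
  by (simp_all add: Transposition.transpose_def)

lemma W_shift_half:
  assumes "\<sigma> permutes UNIV" "eps \<in> {1/4, 3/4}"
  shows "(\<chi> m. a * (vector [of_int i, of_int j + 1/2, of_int k + eps] :: real^3) $ \<sigma> m) + (\<chi> m. a * (of_int (N m) + 1/2)) \<in> W_set a"
proof -
  define M where "M = (\<lambda>c. N (inv \<sigma> c))"
  have NM: "N m = M (\<sigma> m)" for m by (simp add: M_def permutes_inverses(2)[OF assms(1)])
  define \<tau> where "\<tau> = Transposition.transpose (1::3) 2"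
  have tp: "\<tau> \<circ> \<sigma> permutes UNIV" unfolding \<tau>_def by (intro permutes_compose assms(1) permutes_swap_id) auto
  obtain k' eps' where e': "eps' \<in> {1/4, 3/4}" and ke: "of_int k' + eps' = of_int k + eps + of_int (M 3) + (1/2::real)"
  proof (cases "eps = 1/4")
    case True then show ?thesis using that[of "3/4" "k + M 3"] by simp
  next
    case False then have "eps = 3/4" using assms(2) by auto
    then show ?thesis using that[of "1/4" "k + M 3 + 1"] by simp
  qed
  define v where "v = (vector [of_int i, of_int j + 1/2, of_int k + eps] :: real^3)"
  define v' where "v' = (vector [of_int (j + M 2 + 1), of_int (i + M 1) + 1/2, of_int k' + eps'] :: real^3)"
  have V: "v' $ (\<tau> c) = v $ c + of_int (M c) + 1/2" for c
    using exhaust_3[of c] ke by (auto simp: \<tau>_def tr3 v_def v'_def)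
  have "(\<chi> m. a * v $ \<sigma> m) + (\<chi> m. a * (of_int (N m) + 1/2)) = (\<chi> m. a * v' $ (\<tau> \<circ> \<sigma>) m)"
    unfolding vec_eq_iff by (simp add: V NM algebra_simps)
  then show ?thesis unfolding W_set_def v_def v'_def using e' tp by blast
qed

lemma W_add: assumes "w \<in> W_set a" "p \<in> bcc a" shows "w + p \<in> W_set a"
proof -
  from assms(1) obtain i j k eps \<sigma> where e: "eps \<in> {1/4,3/4}" "\<sigma> permutes UNIV"
    and w: "w = (\<chi> m. a * (vector [of_int i, of_int j + 1/2, of_int k + eps] :: real^3) $ \<sigma> m)"
    unfolding W_set_def by blast
  from assms(2) obtain i' j' k' where P: "p = vector [a * of_int i', a * of_int j', a * of_int k'] \<or> p = vector [a * (of_int i' + 1/2), a * (of_int j' + 1/2), a * (of_int k' + 1/2)]"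
    unfolding int_lattice_def half_lattice_def by blast
  then show ?thesis
  proof
    assume "p = vector [a * of_int i', a * of_int j', a * of_int k']"
    then show ?thesis unfolding w vec_int_chi using W_shift_int[OF e(2,1)] by simp
  next
    assume "p = vector [a * (of_int i' + 1/2), a * (of_int j' + 1/2), a * (of_int k' + 1/2)]"
    then show ?thesis unfolding w vec_half_chi using W_shift_half[OF e(2,1)] by simp
  qed
qed

lemma L3_add: assumes "q \<in> L3 a" "p \<in> bcc a" shows "q + p \<in> L3 a"
proof -
  have "q \<in> bcc a \<or> q \<in> W_set a \<or> q \<in> Lambda_set a" using assms(1) unfolding L3_def by blast
  then show ?thesis
  proof (elim disjE)
    assume "q \<in> bcc a" then show ?thesis using bcc_add[OF _ assms(2)] unfolding L3_def by blast
  next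
    assume "q \<in> W_set a" then show ?thesis using W_add[OF _ assms(2)] unfolding L3_def by blast
  next
    assume "q \<in> Lambda_set a"
    then obtain p0 s where q: "q = p0 + (5 * a / 24) *\<^sub>R s" and p0: "p0 \<in> bcc a"
      and s: "\<forall>m. s $ m \<in> {-1, 1}" unfolding Lambda_set_def by blast
    have "q + p = (p0 + p) + (5 * a / 24) *\<^sub>R s" by (simp add: q algebra_simps)
    moreover have "p0 + p \<in> bcc a" by (rule bcc_add[OF p0 assms(2)])
    ultimately have "q + p \<in> Lambda_set a" unfolding Lambda_set_def using s by blast
    then show ?thesis unfolding L3_def by blast
  qed
qed

lemma cell_trans: assumes "a > 0" "p \<in> bcc a"
  shows "voronoi_cell (L3 a) p = (\<lambda>x. p + x) ` octahedron a"
proof -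
  have eq: "y \<in> voronoi_cell (L3 a) p \<longleftrightarrow> y - p \<in> voronoi_cell (L3 a) 0" for y
  proof
    assume y: "y \<in> voronoi_cell (L3 a) p"
    show "y - p \<in> voronoi_cell (L3 a) 0" unfolding voronoi_cell_def
    proof (intro CollectI ballI)
      fix q assume "q \<in> L3 a"
      then have "q + p \<in> L3 a" by (rule L3_add[OF _ assms(2)])
      with y have "norm (y - p) \<le> norm (y - (q + p))" unfolding voronoi_cell_def by blast
      then show "norm (y - p - 0) \<le> norm (y - p - q)" by (simp add: algebra_simps)
    qed
  next
    assume y: "y - p \<in> voronoi_cell (L3 a) 0"
    show "y \<in> voronoi_cell (L3 a) p" unfolding voronoi_cell_def
    proof (intro CollectI ballI)
      fix q assume "q \<in> L3 a"
      then have "q + - p \<in> L3 a" by (rule L3_add[OF _ bcc_neg[OF assms(2)]])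
      with y have "norm (y - p - 0) \<le> norm (y - p - (q + - p))" unfolding voronoi_cell_def by blast
      then show "norm (y - p) \<le> norm (y - q)" by (simp add: algebra_simps)
    qed
  qed
  show ?thesis
  proof (rule set_eqI)
    fix y
    have "y \<in> (\<lambda>x. p + x) ` octahedron a \<longleftrightarrow> y - p \<in> octahedron a"
    proof
      assume "y \<in> (\<lambda>x. p + x) ` octahedron a"
      then obtain x where "x \<in> octahedron a" "y = p + x" by blast
      then show "y - p \<in> octahedron a" by simp
    next
      assume "y - p \<in> octahedron a"
      moreover have "y = p + (y - p)" by simp
      ultimately show "y \<in> (\<lambda>x. p + x) ` octahedron a" by (rule rev_image_eqI)
    qed
    then show "y \<in> voronoi_cell (L3 a) p \<longleftrightarrow> y \<in> (\<lambda>x. p + x) ` octahedron a"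
      using eq cell0[OF assms(1)] by simp
  qed
qed



definition refl3 :: "3 \<Rightarrow> real^3 \<Rightarrow> real^3" where
  "refl3 k x = (\<chi> i. if i = k then - x$i else x$i)"

lemma refl3_nth: "refl3 k x $ i = (if i = k then - x$i else x$i)"
  by (simp add: refl3_def)

lemma refl3_orth: "orthogonal_transformation (refl3 k)"
  unfolding orthogonal_transformation_def
proof
  show "linear (refl3 k)"
    by (rule linearI) (auto simp: vec_eq_iff refl3_nth)
  show "\<forall>v w. refl3 k v \<bullet> refl3 k w = v \<bullet> w"
    by (auto simp: inner_vec_def refl3_nth intro!: sum.cong)
qed

lemma refl3_invol: "refl3 k (refl3 k x) = x"
  by (simp add: vec_eq_iff refl3_nth)

lemma halve:
  assumes S: "compact S" and sym: "\<And>x. x \<in> S \<Longrightarrow> refl3 k x \<in> S"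
  shows "measure lebesgue S = 2 * measure lebesgue (S \<inter> {x. 0 \<le> x$k})"
proof -
  define P where "P = S \<inter> {x. 0 \<le> x$k}"
  define N where "N = refl3 k ` P"
  have cP: "compact P" unfolding P_def
    by (intro compact_Int_closed S closed_halfspace_component_ge_cart)
  hence mP: "P \<in> lmeasurable" by (rule lmeasurable_compact)
  have mN: "N \<in> lmeasurable" and eN: "measure lebesgue N = measure lebesgue P"
    unfolding N_def using measurable_orthogonal_image[OF refl3_orth mP] measure_orthogonal_image[OF refl3_orth mP] by auto
  have SU: "S = P \<union> N"
  proof
    show "S \<subseteq> P \<union> N"
    proof
      fix x assume x: "x \<in> S"
      show "x \<in> P \<union> N"
      proof (cases "0 \<le> x$k")
        case True then show ?thesis using x by (simp add: P_def)
      next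
        case False
        then have "refl3 k x \<in> P" using sym[OF x] by (simp add: P_def refl3_nth)
        moreover have "x = refl3 k (refl3 k x)" by (simp add: refl3_invol)
        ultimately show ?thesis unfolding N_def by blast
      qed
    qed
    show "P \<union> N \<subseteq> S" unfolding N_def P_def using sym by auto
  qed
  have "P \<inter> N \<subseteq> {x. x$k = 0}"
  proof
    fix x assume "x \<in> P \<inter> N"
    then obtain y where "x \<in> P" "y \<in> P" "x = refl3 k y" unfolding N_def by blast
    then show "x \<in> {x. x$k = 0}" by (auto simp: P_def refl3_nth)
  qed
  hence "negligible (P \<inter> N)" by (rule negligible_subset[OF negligible_standard_hyperplane_cart])
  hence z: "measure lebesgue (P \<inter> N) = 0" by (rule negligible_imp_measure0)
  have "measure lebesgue S = measure lebesgue P + measure lebesgue N - measure lebesgue (P \<inter> N)"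
    unfolding SU by (rule measure_Un3[OF mP mN])
  then show ?thesis using z eN unfolding P_def by simp
qed

lemma oct_compact: "compact (octahedron a)"
proof -
  have "closed (octahedron a)" unfolding octahedron_def
    by (intro closed_Collect_le continuous_intros)
  moreover have "bounded (octahedron a)" unfolding bounded_iff
  proof (intro exI ballI)
    fix x assume "x \<in> octahedron a"
    then show "norm x \<le> 5 * a / 16" using norm_le_l1_cart[of x] by (simp add: octahedron_def sum_3)
  qed
  ultimately show ?thesis by (simp add: compact_eq_bounded_closed)
qed

lemma Basis3: "(Basis :: (real^3) set) = range (\<lambda>i. axis i 1)"
  by (auto simp: Basis_vec_def)

lemma sum_Basis3: "sum (\<lambda>i. x \<bullet> i) (Basis :: (real^3) set) = x$1 + x$2 + x$3"
proof -
  have "sum (\<lambda>i. x \<bullet> i) (Basis :: (real^3) set) = sum ((\<lambda>i. x \<bullet> i) \<circ> (\<lambda>i. axis i 1)) UNIV"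
    unfolding Basis3 by (rule sum.reindex) (auto simp: inj_on_def axis_eq_axis)
  also have "\<dots> = x$1 + x$2 + x$3" by (simp add: sum_3 inner_axis)
  finally show ?thesis .
qed

lemma std3: "convex hull (insert 0 Basis) = {x::real^3. 0 \<le> x$1 \<and> 0 \<le> x$2 \<and> 0 \<le> x$3 \<and> x$1 + x$2 + x$3 \<le> 1}"
proof -
  have "convex hull (insert 0 Basis) = {x::real^3. (\<forall>i\<in>Basis. 0 \<le> x\<bullet>i) \<and> sum (\<lambda>i. x\<bullet>i) Basis \<le> 1}"
    by (rule std_simplex)
  also have "\<dots> = {x::real^3. 0 \<le> x$1 \<and> 0 \<le> x$2 \<and> 0 \<le> x$3 \<and> x$1 + x$2 + x$3 \<le> 1}"
    unfolding sum_Basis3 by (simp add: Basis3 inner_axis forall_3 conj_assoc)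
  finally show ?thesis .
qed

lemma std3_measure: "measure lebesgue (convex hull (insert 0 Basis) :: (real^3) set) = 1/6"
proof -
  have c: "compact (convex hull (insert 0 Basis) :: (real^3) set)"
    by (intro finite_imp_compact_convex_hull) auto
  have "measure lebesgue (convex hull (insert 0 Basis) :: (real^3) set) = measure lborel (convex hull (insert 0 Basis) :: (real^3) set)"
    using c by (intro measure_completion) (auto dest: compact_imp_closed)
  also have "\<dots> = 1 / fact DIM(real^3)" by (rule content_std_simplex)
  also have "\<dots> = 1/6" by (simp add: fact_numeral)
  finally show ?thesis .
qed

lemma oct_measure: assumes "a > 0" shows "measure lebesgue (octahedron a) = 125 / 3072 * a ^ 3"
proof -
  define Oc where "Oc = octahedron a"
  define r where "r = 5 * a / 16"
  have r0: "r > 0" using assms by (simp add: r_def)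
  define P1 where "P1 = Oc \<inter> {x. 0 \<le> x$1}"
  define P2 where "P2 = P1 \<inter> {x. 0 \<le> x$2}"
  define P3 where "P3 = P2 \<inter> {x. 0 \<le> x$3}"
  have cO: "compact Oc" unfolding Oc_def by (rule oct_compact)
  have cP1: "compact P1" unfolding P1_def by (intro compact_Int_closed cO closed_halfspace_component_ge_cart)
  have cP2: "compact P2" unfolding P2_def by (intro compact_Int_closed cP1 closed_halfspace_component_ge_cart)
  have m1: "measure lebesgue Oc = 2 * measure lebesgue P1" unfolding P1_def
    by (rule halve[OF cO]) (simp add: Oc_def octahedron_def refl3_nth)
  have m2: "measure lebesgue P1 = 2 * measure lebesgue P2" unfolding P2_def
    by (rule halve[OF cP1]) (auto simp add: P1_def Oc_def octahedron_def refl3_nth)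
  have m3: "measure lebesgue P2 = 2 * measure lebesgue P3" unfolding P3_def
    by (rule halve[OF cP2]) (auto simp add: P2_def P1_def Oc_def octahedron_def refl3_nth)
  define T where "T = (convex hull (insert 0 Basis) :: (real^3) set)"
  have "P3 = (\<lambda>x. r *\<^sub>R x + 0) ` T"
  proof
    show "P3 \<subseteq> (\<lambda>x. r *\<^sub>R x + 0) ` T"
    proof
      fix x assume x: "x \<in> P3"
      have "x = r *\<^sub>R ((1/r) *\<^sub>R x) + 0" using r0 by simp
      moreover have "(1/r) *\<^sub>R x \<in> T" using x r0
        by (auto simp: T_def std3 P3_def P2_def P1_def Oc_def octahedron_def r_def divide_simps)
      ultimately show "x \<in> (\<lambda>x. r *\<^sub>R x + 0) ` T" by (rule image_eqI)
    qed
    show "(\<lambda>x. r *\<^sub>R x + 0) ` T \<subseteq> P3"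
    proof
      fix y assume "y \<in> (\<lambda>x. r *\<^sub>R x + 0) ` T"
      then obtain x where x: "x \<in> T" and y: "y = r *\<^sub>R x" by auto
      have "r * x$1 + r * x$2 + r * x$3 \<le> r * 1" using x r0 unfolding T_def std3
        by (simp add: distrib_left[symmetric])
      then show "y \<in> P3" using x r0 unfolding y T_def std3
        by (simp add: P3_def P2_def P1_def Oc_def octahedron_def r_def)
    qed
  qed
  hence "measure lebesgue P3 = \<bar>r\<bar> ^ DIM(real^3) * measure lebesgue T"
    by (simp only: measure_lebesgue_affine)
  also have "\<dots> = r^3 / 6" using r0 by (simp add: T_def std3_measure)
  finally have "measure lebesgue P3 = r^3/6" .
  then show ?thesis using m1 m2 m3 unfolding Oc_def r_def by (simp add: power3_eq_cube)
qed


theorem mainTheorem6: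
  fixes a :: real
  assumes "a > 0"
  shows "voronoi_cell (L3 a) 0 = octahedron a
       \<and> measure lebesgue (octahedron a) = 125 / 3072 * a ^ 3
       \<and> (\<forall>p \<in> int_lattice a \<union> half_lattice a.
             voronoi_cell (L3 a) p = (\<lambda>x. p + x) ` octahedron a)"
  using cell0[OF assms] oct_measure[OF assms] cell_trans[OF assms] by blast

end
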